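(* Let $S_{r,N}$ be an atomic exponential Puiseux semiring. Then $\rho(S_{r,N})=1$ if $r\in\mathbb{N}$, and $\rho(S_{r,N})=\infty$ if $r\notin\mathbb{N}$.
   Context: A numerical monoid $N$ is an additive submonoid of $\mathbb{N}=\{0,1,2,\dots\}$ with finite complement. The exponential Puiseux semiring $S_{r,N}$ ($r\in\mathbb{Q}_{>0}$) is the additive submonoid of $\mathbb{Q}_{\ge0}$ generated by $\{r^k:k\in N\}$. For an atomic monoid $M$ with sets of lengths $\mathsf{L}(x)$, set $\rho(0)=1$, $\rho(x)=\sup\mathsf{L}(x)/\inf\mathsf{L}(x)$ for $x\neq0$, and the elasticity $\rho(M)=\sup\{\rho(x):x\in M\}$. *)

theory Defs
  imports Complex_Main "HOL-Library.Multiset" "HOL-Library.Extended_Real"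
begin

definition numerical_monoid :: "nat set \<Rightarrow> bool" where
  "numerical_monoid N \<longleftrightarrow> 0 \<in> N \<and> (\<forall>a\<in>N. \<forall>b\<in>N. a + b \<in> N) \<and> finite (UNIV - N)"

inductive_set exp_puiseux :: "rat \<Rightarrow> nat set \<Rightarrow> rat set" for r :: rat and N :: "nat set" where
  zero: "0 \<in> exp_puiseux r N"
| add_gen: "k \<in> N \<Longrightarrow> x \<in> exp_puiseux r N \<Longrightarrow> r ^ k + x \<in> exp_puiseux r N"

text \<open>Atoms of a submonoid M of (Q_{>=0},+); its only unit is 0.\<close>
definition atoms :: "rat set \<Rightarrow> rat set" where
  "atoms M = {a \<in> M. a \<noteq> 0 \<and> (\<forall>x\<in>M. \<forall>y\<in>M. a = x + y \<longrightarrow> x = 0 \<or> y = 0)}"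

definition factorizations :: "rat set \<Rightarrow> rat \<Rightarrow> rat multiset set" where
  "factorizations M x = {z. set_mset z \<subseteq> atoms M \<and> sum_mset z = x}"

definition lengths :: "rat set \<Rightarrow> rat \<Rightarrow> nat set" where
  "lengths M x = size ` factorizations M x"

definition atomic :: "rat set \<Rightarrow> bool" where
  "atomic M \<longleftrightarrow> (\<forall>x\<in>M. x \<noteq> 0 \<longrightarrow> factorizations M x \<noteq> {})"

definition elasticity_elem :: "rat set \<Rightarrow> rat \<Rightarrow> ereal" where
  "elasticity_elem M x = (if x = 0 then 1 else
     (SUP l\<in>lengths M x. ereal (real l)) / (INF l\<in>lengths M x. ereal (real l)))"

definition elasticity :: "rat set \<Rightarrow> ereal" where
  "elasticity M = (SUP x\<in>M. elasticity_elem M x)"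

end

theory Submission
  imports Defs
begin

abbreviation gsum :: "rat \<Rightarrow> nat multiset \<Rightarrow> rat" where
  "gsum r c \<equiv> sum_mset (image_mset (\<lambda>j. r ^ j) c)"

lemma S_rep:
  assumes "x \<in> exp_puiseux r N"
  shows "\<exists>c. set_mset c \<subseteq> N \<and> x = gsum r c"
  using assms
proof (induction rule: exp_puiseux.induct)
  case zero
  then show ?case by (intro exI[of _ "{#}"]) auto
next
  case (add_gen k x)
  then obtain c where "set_mset c \<subseteq> N" "x = gsum r c" by blast
  then show ?case using add_gen by (intro exI[of _ "add_mset k c"]) auto
qed

lemma rep_S:
  assumes "set_mset c \<subseteq> N"
  shows "gsum r c \<in> exp_puiseux r N"
  using assms
proof (induction c)
  case empty
  then show ?case by (simp add: exp_puiseux.zero)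
next
  case (add x c)
  then show ?case by (simp add: exp_puiseux.add_gen)
qed

lemma S_add:
  assumes "x \<in> exp_puiseux r N" "y \<in> exp_puiseux r N"
  shows "x + y \<in> exp_puiseux r N"
  using assms
proof (induction rule: exp_puiseux.induct)
  case zero
  then show ?case by simp
next
  case (add_gen k x)
  then show ?case using exp_puiseux.add_gen[of k N "x + y" r] by (simp add: add.assoc)
qed

lemma gen_S: "k \<in> N \<Longrightarrow> r ^ k \<in> exp_puiseux r N"
  using exp_puiseux.add_gen[OF _ exp_puiseux.zero, of k N r] by simp

lemma gsum_pos: "r > 0 \<Longrightarrow> c \<noteq> {#} \<Longrightarrow> gsum r c > 0"
proof (induction c)
  case empty
  then show ?case by simp
next
  case (add x c)
  then show ?case
    by (cases "c = {#}") (auto intro: add_pos_pos)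
qed

lemma gsum_nonneg: "r > 0 \<Longrightarrow> gsum r c \<ge> 0"
  using gsum_pos[of r c] by (cases "c = {#}") auto

lemma S_nonneg: "r > 0 \<Longrightarrow> x \<in> exp_puiseux r N \<Longrightarrow> x \<ge> 0"
  using S_rep gsum_nonneg by blast

lemma decomp:
  assumes "r > 0" "x \<in> exp_puiseux r N" "y \<in> exp_puiseux r N" "x \<noteq> 0" "y \<noteq> 0"
  shows "\<exists>c. set_mset c \<subseteq> N \<and> size c \<ge> 2 \<and> x + y = gsum r c"
proof -
  obtain cx where cx: "set_mset cx \<subseteq> N" "x = gsum r cx" using S_rep assms(2) by blast
  obtain cy where cy: "set_mset cy \<subseteq> N" "y = gsum r cy" using S_rep assms(3) by blast
  have "cx \<noteq> {#}" "cy \<noteq> {#}" using cx cy assms by auto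
  then have "size cx \<ge> 1" "size cy \<ge> 1"
    by (auto simp: Suc_le_eq nonempty_has_size)
  then show ?thesis using cx cy by (intro exI[of _ "cx + cy"]) auto
qed

lemma sum_mult_int:
  assumes "\<And>j. j \<in># c \<Longrightarrow> r ^ j * B = of_nat (g j)"
  shows "gsum r c * B = of_nat (sum_mset (image_mset g c))"
  using assms
proof (induction c)
  case empty
  then show ?case by simp
next
  case (add x c)
  then show ?case by (simp add: distrib_right)
qed

lemma dvd_sum_mset_nat:
  assumes "\<And>j. j \<in># c \<Longrightarrow> (d::nat) dvd g j"
  shows "d dvd sum_mset (image_mset g c)"
  using assms by (induction c) auto

lemma pow_frac:
  assumes "j \<le> J" "b > 0"
  shows "(of_nat a / of_nat b :: rat) ^ j * of_nat b ^ J = of_nat (a ^ j * b ^ (J - j))"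
proof -
  have "(of_nat b :: rat) ^ J = of_nat b ^ j * of_nat b ^ (J - j)"
    using assms by (simp add: power_add[symmetric])
  then show ?thesis using assms by (simp add: power_divide)
qed


lemma big_elem:
  assumes "r > 0" "c = add_mset j c'" "size c \<ge> 2"
  shows "gsum r c > r ^ j"
proof -
  have "c' \<noteq> {#}" using assms by auto
  then have "gsum r c' > 0" using gsum_pos assms by blast
  then show ?thesis using assms by simp
qed

lemma atom_gt1:
  assumes r: "r = of_nat a / of_nat b" and b: "b \<ge> 2" and cop: "coprime a b"
    and r1: "r > 1" and k: "k \<in> N"
  shows "r ^ k \<in> atoms (exp_puiseux r N)"
proof -
  have rpos: "r > 0" using r1 by simp
  have nz: "r ^ k \<noteq> 0" using rpos by simp
  { fix x y assume xy: "x \<in> exp_puiseux r N" "y \<in> exp_puiseux r N" "r ^ k = x + y"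
      "x \<noteq> 0" "y \<noteq> 0"
    then obtain c where c: "set_mset c \<subseteq> N" "size c \<ge> 2" "r ^ k = gsum r c"
      using decomp[OF rpos] by metis
    have lt: "j < k" if jc: "j \<in># c" for j
    proof (rule ccontr)
      assume "\<not> j < k"
      then have "r ^ k \<le> r ^ j" using r1 by (intro power_increasing) auto
      moreover obtain c' where "c = add_mset j c'" using multi_member_split[OF jc] by blast
      then have "gsum r c > r ^ j" using big_elem[OF rpos] c by blast
      ultimately show False using c by simp
    qed
    have A: "gsum r c * of_nat b ^ k = of_nat (sum_mset (image_mset (\<lambda>j. a ^ j * b ^ (k - j)) c))"
      apply (rule sum_mult_int)
      subgoal for j using pow_frac[of j k b a] lt[of j] b unfolding r by simp
      done
    have B: "r ^ k * of_nat b ^ k = of_nat (a ^ k * b ^ (k - k))"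
      using b unfolding r by (intro pow_frac) auto
    have "(of_nat (a ^ k * b ^ (k - k)) :: rat) = of_nat (sum_mset (image_mset (\<lambda>j. a ^ j * b ^ (k - j)) c))"
      using A B c(3) by metis
    then have eq: "a ^ k = sum_mset (image_mset (\<lambda>j. a ^ j * b ^ (k - j)) c)"
      by (simp only: of_nat_eq_iff) simp
    have "b dvd sum_mset (image_mset (\<lambda>j. a ^ j * b ^ (k - j)) c)"
    proof (rule dvd_sum_mset_nat)
      fix j assume "j \<in># c"
      then have "k - j = Suc (k - j - 1)" using lt by fastforce
      then show "b dvd a ^ j * b ^ (k - j)" by (metis dvd_mult dvd_triv_left power_Suc)
    qed
    then have "b dvd a ^ k" using eq by simp
    moreover have "coprime b (a ^ k)" using cop by (simp add: coprime_commute)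
    ultimately have "b dvd 1" by (metis coprime_absorb_right dvd_refl coprime_dvd_mult_right_iff mult.right_neutral)
    then have False using b by simp }
  then show ?thesis unfolding atoms_def using gen_S[OF k] nz by blast
qed

lemma atom_lt1:
  assumes r: "r = of_nat a / of_nat b" and b: "b > 0" and a: "a \<ge> 2" and cop: "coprime a b"
    and r1: "r < 1" and k: "k \<in> N"
  shows "r ^ k \<in> atoms (exp_puiseux r N)"
proof -
  have rpos: "r > 0" using r a b by simp
  have nz: "r ^ k \<noteq> 0" using rpos by simp
  { fix x y assume xy: "x \<in> exp_puiseux r N" "y \<in> exp_puiseux r N" "r ^ k = x + y"
      "x \<noteq> 0" "y \<noteq> 0"
    then obtain c where c: "set_mset c \<subseteq> N" "size c \<ge> 2" "r ^ k = gsum r c"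
      using decomp[OF rpos] by metis
    have gt: "j > k" if jc: "j \<in># c" for j
    proof (rule ccontr)
      assume "\<not> j > k"
      then have "r ^ k \<le> r ^ j" using r1 rpos by (intro power_decreasing) auto
      moreover obtain c' where "c = add_mset j c'" using multi_member_split[OF jc] by blast
      then have "gsum r c > r ^ j" using big_elem[OF rpos] c by blast
      ultimately show False using c by simp
    qed
    define J where "J = Max (set_mset c)"
    have cne: "c \<noteq> {#}" using c by auto
    have jJ: "j \<le> J" if "j \<in># c" for j using that unfolding J_def by simp
    have kJ: "k \<le> J" using gt jJ cne by (meson less_imp_le_nat multiset_nonemptyE order_trans)
    have A: "gsum r c * of_nat b ^ J = of_nat (sum_mset (image_mset (\<lambda>j. a ^ j * b ^ (J - j)) c))"
      apply (rule sum_mult_int)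
      subgoal for j using pow_frac[of j J b a] jJ[of j] b unfolding r by simp
      done
    have B: "r ^ k * of_nat b ^ J = of_nat (a ^ k * b ^ (J - k))"
      using b kJ unfolding r by (intro pow_frac) auto
    have "(of_nat (a ^ k * b ^ (J - k)) :: rat) = of_nat (sum_mset (image_mset (\<lambda>j. a ^ j * b ^ (J - j)) c))"
      using A B c(3) by metis
    then have eq: "a ^ k * b ^ (J - k) = sum_mset (image_mset (\<lambda>j. a ^ j * b ^ (J - j)) c)"
      by (simp only: of_nat_eq_iff)
    have "a ^ k * a dvd sum_mset (image_mset (\<lambda>j. a ^ j * b ^ (J - j)) c)"
    proof (rule dvd_sum_mset_nat)
      fix j assume "j \<in># c"
      then have "a ^ k * a dvd a ^ j" using gt
        by (metis Suc_leI le_imp_power_dvd power_Suc2)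
      then show "a ^ k * a dvd a ^ j * b ^ (J - j)" by (rule dvd_mult2)
    qed
    then have "a ^ k * a dvd a ^ k * b ^ (J - k)" using eq by simp
    then have "a dvd b ^ (J - k)" using a by (simp add: nat_mult_dvd_cancel_disj)
    moreover have "coprime a (b ^ (J - k))" using cop by simp
    ultimately have "a dvd 1" by (metis coprime_absorb_right dvd_refl coprime_dvd_mult_right_iff mult.right_neutral)
    then have False using a by simp }
  then show ?thesis unfolding atoms_def using gen_S[OF k] nz by blast
qed


lemma conductor:
  assumes "numerical_monoid N"
  shows "\<exists>C\<ge>1. \<forall>k\<ge>C. k \<in> N"
proof -
  have "finite (UNIV - N)" using assms unfolding numerical_monoid_def by blast
  then obtain m where m: "\<forall>n\<in>UNIV - N. n \<le> m" using finite_nat_set_iff_bounded_le by blast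
  show ?thesis
  proof (intro exI[of _ "m + 1"] conjI allI impI)
    fix k assume "m + 1 \<le> k" then show "k \<in> N" using m by force
  qed simp
qed

lemma gsum_repl: "gsum r (replicate_mset n j) = of_nat n * r ^ j"
  by (simp add: sum_mset_replicate_mset)

lemma sum_int_mult:
  assumes "\<And>u. u \<in># z \<Longrightarrow> \<exists>n. u * B = (of_nat n :: rat)"
  shows "\<exists>n. sum_mset z * B = of_nat n"
  using assms
proof (induction z)
  case empty
  then show ?case by (intro exI[of _ 0]) simp
next
  case (add x z)
  then obtain n m where "sum_mset z * B = of_nat n" "x * B = of_nat m" by fastforce
  then show ?case by (intro exI[of _ "m + n"]) (simp add: distrib_right)
qed

lemma not_atomic_unit:
  assumes r: "r = 1 / of_nat b" and b: "b \<ge> 2" and C: "C \<ge> 1" "\<forall>k\<ge>C. k \<in> N"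
  shows "\<not> atomic (exp_puiseux r N)"
proof
  assume at: "atomic (exp_puiseux r N)"
  have rpos: "r > 0" using r b by simp
  have rb: "r * of_nat b = 1" using r b by simp
  have atomj: "\<exists>j<C. u = r ^ j" if u: "u \<in> atoms (exp_puiseux r N)" for u
  proof -
    have uS: "u \<in> exp_puiseux r N" and u0: "u \<noteq> 0"
      and uat: "\<And>x y. x \<in> exp_puiseux r N \<Longrightarrow> y \<in> exp_puiseux r N \<Longrightarrow> u = x + y \<Longrightarrow> x = 0 \<or> y = 0"
      using u unfolding atoms_def by auto
    obtain c where c: "set_mset c \<subseteq> N" "u = gsum r c" using S_rep uS by blast
    have "c \<noteq> {#}" using c u0 by auto
    then obtain j c' where jc: "c = add_mset j c'" by (metis multiset_cases)
    have "c' = {#}"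
    proof (rule ccontr)
      assume "c' \<noteq> {#}"
      then have "gsum r c' > 0" using gsum_pos rpos by blast
      moreover have "u = r ^ j + gsum r c'" using c jc by simp
      moreover have "r ^ j \<in> exp_puiseux r N" "gsum r c' \<in> exp_puiseux r N"
        using c jc by (auto intro!: gen_S rep_S)
      ultimately show False using uat rpos by fastforce
    qed
    then have uj: "u = r ^ j" and jN: "j \<in> N" using c jc by auto
    have "j < C"
    proof (rule ccontr)
      assume "\<not> j < C"
      then have j1: "j + 1 \<in> N" using C by simp
      have "r ^ j = r ^ j * (r * of_nat b)" using rb by simp
      also have "\<dots> = of_nat b * r ^ (j + 1)" by (simp add: algebra_simps)
      also have "\<dots> = r ^ (j + 1) + of_nat (b - 1) * r ^ (j + 1)"
        using b by (simp add: of_nat_diff algebra_simps)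
      finally have "u = r ^ (j + 1) + gsum r (replicate_mset (b - 1) (j + 1))"
        using uj gsum_repl by simp
      moreover have "r ^ (j + 1) \<in> exp_puiseux r N" using gen_S j1 by blast
      moreover have "gsum r (replicate_mset (b - 1) (j + 1)) \<in> exp_puiseux r N"
        using j1 by (intro rep_S) auto
      moreover have "gsum r (replicate_mset (b - 1) (j + 1)) \<noteq> 0"
        using gsum_repl[of r "b - 1" "j + 1"] b rpos by simp
      ultimately show False using uat rpos by fastforce
    qed
    then show ?thesis using uj by blast
  qed
  have CN: "C \<in> N" using C by simp
  have "r ^ C \<noteq> 0" using rpos by simp
  then obtain z where z: "set_mset z \<subseteq> atoms (exp_puiseux r N)" "sum_mset z = r ^ C"
    using at gen_S[OF CN] unfolding atomic_def factorizations_def by blast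
  have "\<exists>n. sum_mset z * of_nat b ^ (C - 1) = of_nat n"
  proof (rule sum_int_mult)
    fix u assume "u \<in># z"
    then obtain j where "j < C" "u = r ^ j" using atomj z by blast
    then have "u * of_nat b ^ (C - 1) = of_nat (1 ^ j * b ^ (C - 1 - j))"
      using pow_frac[of j "C - 1" b 1] b r by simp
    then show "\<exists>n. u * of_nat b ^ (C - 1) = of_nat n" by blast
  qed
  then obtain n where n: "r ^ C * of_nat b ^ (C - 1) = of_nat n" using z by auto
  have "r ^ C * of_nat b ^ (C - 1) * of_nat b = (r * of_nat b) ^ C"
    using C by (simp add: power_mult_distrib mult.assoc power_Suc2[symmetric])
  then have "of_nat n * of_nat b = (1::rat)" using n rb by simp
  then have "n * b = 1" by (metis of_nat_1 of_nat_eq_iff of_nat_mult)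
  then show False using b by simp
qed

lemma elem_ge:
  assumes "x \<noteq> 0" "p \<in> lengths M x" "q \<in> lengths M x"
  shows "ereal (real p / real q) \<le> elasticity_elem M x"
proof -
  let ?L = "lengths M x"
  have Lpos: "l \<ge> 1" if lL: "l \<in> ?L" for l
  proof -
    obtain z where "l = size z" "sum_mset z = x" using lL
      unfolding lengths_def factorizations_def by blast
    then show ?thesis using assms(1) by (cases z) auto
  qed
  define I where "I = (INF l\<in>?L. ereal (real l))"
  define Sp where "Sp = (SUP l\<in>?L. ereal (real l))"
  have Iq: "I \<le> ereal (real q)" unfolding I_def using assms(3) by (rule INF_lower)
  have I1: "1 \<le> I" unfolding I_def using Lpos by (intro INF_greatest) auto
  obtain i where i: "I = ereal i" using Iq I1 by (cases I) auto
  have i1: "1 \<le> i" "i \<le> real q" using Iq I1 i by auto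
  have Sp: "ereal (real p) \<le> Sp" unfolding Sp_def using assms(2) by (rule SUP_upper)
  have "ereal (real p) / ereal i \<le> Sp / ereal i"
    using Sp i1 by (intro ereal_divide_right_mono) auto
  moreover have "ereal (real p) / ereal i = ereal (real p / i)" using i1 by simp
  moreover have "real p / real q \<le> real p / i" using i1 by (intro divide_left_mono) auto
  ultimately have "ereal (real p / real q) \<le> Sp / I" using i by (metis ereal_less_eq(3) order_trans)
  then show ?thesis unfolding elasticity_elem_def Sp_def I_def using assms(1) by simp
qed


lemma infinite_case:
  assumes r: "r = of_nat a / of_nat b" and ab: "a \<ge> 1" "b \<ge> 1" "a \<noteq> b"
    and C: "\<forall>k\<ge>C. k \<in> N" and atk: "\<And>k. k \<in> N \<Longrightarrow> r ^ k \<in> atoms (exp_puiseux r N)"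
  shows "elasticity (exp_puiseux r N) = \<infinity>"
  unfolding elasticity_def
proof (rule SUP_PInfty)
  fix m :: nat
  define t :: real where "t = (if a > b then real a / real b else real b / real a)"
  have t1: "t > 1" using ab unfolding t_def by auto
  obtain n where n: "real m < t ^ n" using real_arch_pow[OF t1] by blast
  define x where "x = of_nat (a ^ n) * r ^ C"
  have rpos: "r > 0" using r ab by simp
  have rb: "r * of_nat b = of_nat a" using r ab by simp
  have CN: "C \<in> N" "C + n \<in> N" using C by auto
  have xS: "x \<in> exp_puiseux r N"
    using rep_S[of "replicate_mset (a ^ n) C" N r] CN gsum_repl[of r "a ^ n" C]
    unfolding x_def by auto
  have x0: "x \<noteq> 0" unfolding x_def using ab rpos by simp
  have f1: "a ^ n \<in> lengths (exp_puiseux r N) x"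
    unfolding lengths_def factorizations_def
    using atk[OF CN(1)] x_def sum_mset_replicate_mset[of "a ^ n" "r ^ C"]
    by (intro image_eqI[of _ _ "replicate_mset (a ^ n) (r ^ C)"]) auto
  have "of_nat (b ^ n) * r ^ (C + n) = (r * of_nat b) ^ n * r ^ C"
    by (simp add: power_add power_mult_distrib algebra_simps)
  also have "\<dots> = x" unfolding x_def rb by simp
  finally have s2: "of_nat (b ^ n) * r ^ (C + n) = x" .
  have f2: "b ^ n \<in> lengths (exp_puiseux r N) x"
    unfolding lengths_def factorizations_def
    using atk[OF CN(2)] s2 sum_mset_replicate_mset[of "b ^ n" "r ^ (C + n)"]
    by (intro image_eqI[of _ _ "replicate_mset (b ^ n) (r ^ (C + n))"]) auto
  have e1: "ereal (real (a ^ n) / real (b ^ n)) \<le> elasticity_elem (exp_puiseux r N) x"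
    using elem_ge[OF x0 f1 f2] .
  have e2: "ereal (real (b ^ n) / real (a ^ n)) \<le> elasticity_elem (exp_puiseux r N) x"
    using elem_ge[OF x0 f2 f1] .
  have "t ^ n = (if a > b then real (a ^ n) / real (b ^ n) else real (b ^ n) / real (a ^ n))"
    unfolding t_def by (simp add: power_divide)
  then have "ereal (t ^ n) \<le> elasticity_elem (exp_puiseux r N) x"
    using e1 e2 by (cases "a > b") auto
  then have "ereal (real m) \<le> elasticity_elem (exp_puiseux r N) x"
    using n by (meson ereal_less_eq(3) less_imp_le order_trans)
  then show "\<exists>x\<in>exp_puiseux r N. ereal (real m) \<le> elasticity_elem (exp_puiseux r N) x"
    using xS by blast
qed

lemma int_case:
  assumes r: "r = of_nat m" and m: "m \<ge> 1" and N0: "0 \<in> N"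
  shows "elasticity (exp_puiseux r N) = 1"
proof -
  let ?S = "exp_puiseux r N"
  have SN: "x \<in> \<nat>" if "x \<in> ?S" for x
    using that
  proof (induction rule: exp_puiseux.induct)
    case zero then show ?case by simp
  next
    case (add_gen k x)
    have "r ^ k \<in> \<nat>" unfolding r by (metis of_nat_in_Nats of_nat_power)
    then show ?case using add_gen by (simp add: Nats_add)
  qed
  have NS: "of_nat n \<in> ?S" for n
  proof (induction n)
    case 0 then show ?case by (simp add: exp_puiseux.zero)
  next
    case (Suc n)
    then show ?case using exp_puiseux.add_gen[OF N0 Suc] by (simp add: add.commute)
  qed
  have atoms: "atoms ?S = {1}"
  proof
    show "atoms ?S \<subseteq> {1}"
    proof
      fix u assume u: "u \<in> atoms ?S"
      then have uS: "u \<in> ?S" and u0: "u \<noteq> 0"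
        and uat: "\<And>x y. x \<in> ?S \<Longrightarrow> y \<in> ?S \<Longrightarrow> u = x + y \<Longrightarrow> x = 0 \<or> y = 0"
        unfolding atoms_def by auto
      obtain n where n: "u = of_nat n" using SN[OF uS] Nats_cases by blast
      have "n \<noteq> 0" using n u0 by auto
      show "u \<in> {1}"
      proof (rule ccontr)
        assume "u \<notin> {1}"
        then have "n \<ge> 2" using n \<open>n \<noteq> 0\<close> by auto
        then have "u = 1 + of_nat (n - 1)" using n by (simp add: of_nat_diff)
        moreover have "of_nat (n - 1) \<noteq> (0::rat)" using \<open>n \<ge> 2\<close> by simp
        ultimately show False using uat[OF NS[of 1] NS[of "n - 1"]] by simp
      qed
    qed
  next
    have H: "\<forall>x\<in>?S. \<forall>y\<in>?S. 1 = x + y \<longrightarrow> x = 0 \<or> y = 0"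
    proof (intro ballI impI)
      fix x y assume xy: "x \<in> ?S" "y \<in> ?S" "1 = x + y"
      obtain i where i: "x = of_nat i" using SN[OF xy(1)] Nats_cases by blast
      obtain j where j: "y = of_nat j" using SN[OF xy(2)] Nats_cases by blast
      have "i + j = 1" using xy(3) i j by (metis of_nat_1 of_nat_add of_nat_eq_iff)
      then show "x = 0 \<or> y = 0" using i j by auto
    qed
    have "(1::rat) \<in> atoms ?S"
      unfolding atoms_def using NS[of 1] H by simp
    then show "{1} \<subseteq> atoms ?S" by simp
  qed
  have elem1: "elasticity_elem ?S x = 1" if xS: "x \<in> ?S" for x
  proof (cases "x = 0")
    case True then show ?thesis unfolding elasticity_elem_def by simp
  next
    case False
    obtain n where n: "x = of_nat n" using SN[OF xS] Nats_cases by blast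
    have n0: "n \<noteq> 0" using n False by auto
    have "lengths ?S x = {n}"
    proof
      show "lengths ?S x \<subseteq> {n}"
      proof
        fix l assume "l \<in> lengths ?S x"
        then obtain z where z: "l = size z" "set_mset z \<subseteq> {1}" "sum_mset z = x"
          unfolding lengths_def factorizations_def atoms by blast
        have zr: "z = replicate_mset (size z) 1" by (rule set_mset_subset_singletonD[OF z(2)])
        have "sum_mset z = sum_mset (replicate_mset (size z) (1::rat))" using zr by (rule arg_cong)
        also have "\<dots> = of_nat (size z)" by (simp add: sum_mset_replicate_mset)
        finally show "l \<in> {n}" using z n by simp
      qed
    next
      have "replicate_mset n (1::rat) \<in> factorizations ?S x"
        unfolding factorizations_def atoms using n by (simp add: sum_mset_replicate_mset)
      then show "{n} \<subseteq> lengths ?S x" unfolding lengths_def by force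
    qed
    then show ?thesis unfolding elasticity_elem_def using False n0 by simp
  qed
  have "0 \<in> ?S" by (rule exp_puiseux.zero)
  then show ?thesis unfolding elasticity_def using elem1 by (subst SUP_cong[OF refl elem1]) (auto intro!: SUP_const)
qed


theorem mainTheorem6:
  fixes r :: rat and N :: "nat set"
  assumes "numerical_monoid N" and "r > 0" and "atomic (exp_puiseux r N)"
  shows "(r \<in> \<nat> \<longrightarrow> elasticity (exp_puiseux r N) = 1) \<and>
         (r \<notin> \<nat> \<longrightarrow> elasticity (exp_puiseux r N) = \<infinity>)"
proof (intro conjI impI)
  assume "r \<in> \<nat>"
  then obtain m where m: "r = of_nat m" using Nats_cases by blast
  have "m \<ge> 1" using m assms(2) by (cases m) auto
  moreover have "0 \<in> N" using assms(1) unfolding numerical_monoid_def by blast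
  ultimately show "elasticity (exp_puiseux r N) = 1" using int_case m by blast
next
  assume rN: "r \<notin> \<nat>"
  obtain p q where pq: "quotient_of r = (p, q)" by (cases "quotient_of r") auto
  have q0: "q > 0" using quotient_of_denom_pos[OF pq] .
  have rpq: "r = of_int p / of_int q" using quotient_of_div[OF pq] .
  have p0: "p > 0"
  proof (rule ccontr)
    assume "\<not> p > 0"
    then have "r \<le> 0" using rpq q0 by (simp add: divide_nonpos_pos)
    then show False using assms(2) by simp
  qed
  define a where "a = nat p"
  define b where "b = nat q"
  have r: "r = of_nat a / of_nat b" using rpq p0 q0 unfolding a_def b_def by simp
  have cop: "coprime a b" using quotient_of_coprime[OF pq] p0 q0 unfolding a_def b_def
    by (metis coprime_int_iff int_nat_eq less_le_not_le)
  have a1: "a \<ge> 1" "b \<ge> 1" using p0 q0 unfolding a_def b_def by auto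
  have "b \<noteq> 1"
  proof
    assume "b = 1" then have "r = of_nat a" using r by simp
    then show False using rN by simp
  qed
  then have b2: "b \<ge> 2" using a1 by simp
  have "a \<noteq> b"
  proof
    assume "a = b" then have "r = 1" using r a1 by simp
    then show False using rN by simp
  qed
  obtain C where C: "C \<ge> 1" "\<forall>k\<ge>C. k \<in> N" using conductor[OF assms(1)] by blast
  show "elasticity (exp_puiseux r N) = \<infinity>"
  proof (cases "r > 1")
    case True
    show ?thesis
      by (rule infinite_case[OF r a1 \<open>a \<noteq> b\<close> C(2)]) (rule atom_gt1[OF r b2 cop True])
  next
    case False
    have "r \<noteq> 1" using rN by auto
    then have rl: "r < 1" using False by simp
    have "a \<noteq> 1"
    proof
      assume "a = 1"
      then have "r = 1 / of_nat b" using r by simp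
      then show False using not_atomic_unit[OF _ b2 C] assms(3) by blast
    qed
    then have a2: "a \<ge> 2" using a1 by simp
    show ?thesis
      by (rule infinite_case[OF r a1 \<open>a \<noteq> b\<close> C(2)])
        (rule atom_lt1[OF r _ a2 cop rl], use a1 in auto)
  qed
qed

end
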